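(* Let $k\ge 2$, let $n_1,\dots,n_k\ge 3$, and let $t\ge 1$ be an integer with $t\le (n_i-1)(n_{i+1}-1)$ for all $1\le i\le k-1$. Then every graph $H$ in the family $GS_t(K_{n_1},\dots,K_{n_k})$ satisfies $$D(H,x)=\prod_{i=1}^k\big((1+x)^{n_i}-1\big);$$ in particular all graphs in this family have the same domination polynomial.
   Context: All graphs are finite and simple. For a graph $G$, a set $S\subseteq V(G)$ is dominating if every vertex of $V(G)\setminus S$ is adjacent to some vertex of $S$. Let $d(G,i)$ be the number of dominating sets of $G$ of cardinality $i$; the domination polynomial is $D(G,x)=\sum_{i=1}^{|V(G)|} d(G,i)x^i$. The family $GS_t(K_{n_1},\dots,K_{n_k})$: take vertex-disjoint complete graphs $K_{n_1},\dots,K_{n_k}$, where the vertices of $K_{n_i}$ are labelled $w^{(i)}_1,\dots,w^{(i)}_{n_i}$. For each $1\le i\le k-1$, add a set of exactly $t$ edges between $K_{n_i}$ and $K_{n_{i+1}}$, each of the form $w^{(i)}_a w^{(i+1)}_b$ with $1\le a\le n_i-1$ and $1\le b\le n_{i+1}-1$ (so the vertex $w^{(i)}_{n_i}$ of each clique receives no edges outside its clique). No other edges are added. Every graph arising from some choice of these edge sets belongs to $GS_t(K_{n_1},\dots,K_{n_k})$. *)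

theory Defs
  imports "HOL-Computational_Algebra.Polynomial"
begin

type_synonym 'a graph = "'a set \<times> 'a set set"

definition verts :: "'a graph \<Rightarrow> 'a set" where "verts G = fst G"
definition edges :: "'a graph \<Rightarrow> 'a set set" where "edges G = snd G"

definition dominating :: "'a graph \<Rightarrow> 'a set \<Rightarrow> bool" where
  "dominating G S \<longleftrightarrow> S \<subseteq> verts G \<and>
     (\<forall>v \<in> verts G - S. \<exists>u \<in> S. {u, v} \<in> edges G)"

definition dom_count :: "'a graph \<Rightarrow> nat \<Rightarrow> nat" where
  "dom_count G i = card {S. dominating G S \<and> card S = i}"

definition domination_poly :: "'a graph \<Rightarrow> int poly" where
  "domination_poly G = (\<Sum>i = 1..card (verts G). monom (int (dom_count G i)) i)"

text \<open>Cliques are indexed 0..k-1; vertex (i,a) with a < n i is w^(i+1)_(a+1).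
  The vertex (i, n i - 1) receives no edges outside its clique.\<close>
definition gs_graph :: "nat \<Rightarrow> (nat \<Rightarrow> nat) \<Rightarrow> (nat \<Rightarrow> (nat \<times> nat) set) \<Rightarrow> (nat \<times> nat) graph" where
  "gs_graph k n F =
    ({(i, a). i < k \<and> a < n i},
     {{(i, a), (i, b)} | i a b. i < k \<and> a < n i \<and> b < n i \<and> a \<noteq> b} \<union>
     {{(i, a), (Suc i, b)} | i a b. Suc i < k \<and> (a, b) \<in> F i})"

definition in_GS :: "nat \<Rightarrow> nat \<Rightarrow> (nat \<Rightarrow> nat) \<Rightarrow> (nat \<times> nat) graph \<Rightarrow> bool" where
  "in_GS t k n H \<longleftrightarrow> (\<exists>F. (\<forall>i. Suc i < k \<longrightarrow>
       F i \<subseteq> {0..<n i - 1} \<times> {0..<n (Suc i) - 1} \<and> card (F i) = t)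
     \<and> H = gs_graph k n F)"

end

theory Submission
  imports Defs "HOL-Library.FuncSet"
begin

lemma pow_sum:
  "([:1,1:]^m - 1 :: int poly) = (\<Sum>A\<in>Pow {..<m} - {{}}. [:0,1:]^card A)"
proof -
  have "([:1,1:]^m :: int poly) = (\<Prod>x\<in>{..<m}. [:0,1:] + 1)"
    by (simp add: one_pCons)
  also have "\<dots> = (\<Sum>A\<in>Pow {..<m}. [:0,1:]^card A)"
    by (subst prod_add) auto
  also have "\<dots> = 1 + (\<Sum>A\<in>Pow {..<m} - {{}}. [:0,1:]^card A)"
    by (subst sum.remove[of _ "{}"]) auto
  finally show ?thesis by simp
qed

lemma prod_eq:
  fixes k :: nat and n :: "nat \<Rightarrow> nat"
  defines "D \<equiv> {S. S \<subseteq> {(i, a). i < k \<and> a < n i} \<and> (\<forall>i<k. \<exists>a. (i,a)\<in>S)}"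
  shows "(\<Prod>i<k. [:1, 1:] ^ n i - 1 :: int poly) = (\<Sum>S\<in>D. [:0,1:]^card S)"
proof -
  let ?P = "PiE {..<k} (\<lambda>i. Pow {..<n i} - {{}})"
  have "(\<Prod>i<k. [:1, 1:] ^ n i - 1 :: int poly)
      = (\<Prod>i<k. \<Sum>A\<in>Pow {..<n i} - {{}}. [:0,1:]^card A)"
    by (simp add: pow_sum)
  also have "\<dots> = (\<Sum>f\<in>?P. \<Prod>i<k. [:0,1:]^card (f i))"
    by (rule prod_sum_PiE) auto
  also have "\<dots> = (\<Sum>f\<in>?P. [:0,1:]^card (Sigma {..<k} f))"
  proof (rule sum.cong[OF refl])
    fix f assume f: "f \<in> ?P"
    have "card (Sigma {..<k} f) = (\<Sum>i<k. card (f i))"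
      using f by (intro card_SigmaI) (auto simp: PiE_def Pi_def intro: finite_subset)
    thus "(\<Prod>i<k. [:0,1:]^card (f i)) = ([:0,1:]^card (Sigma {..<k} f) :: int poly)"
      by (simp add: power_sum)
  qed
  also have "\<dots> = (\<Sum>S\<in>D. [:0,1:]^card S)"
  proof (rule sum.reindex_bij_betw)
    show "bij_betw (Sigma {..<k}) ?P D"
    proof (rule bij_betw_byWitness[where f' = "\<lambda>S. restrict (\<lambda>i. {a. (i,a)\<in>S}) {..<k}"])
      show "\<forall>f\<in>?P. restrict (\<lambda>i. {a. (i, a) \<in> Sigma {..<k} f}) {..<k} = f"
        by (auto simp: PiE_def extensional_def restrict_def fun_eq_iff)
      show "\<forall>S\<in>D. Sigma {..<k} (restrict (\<lambda>i. {a. (i, a) \<in> S}) {..<k}) = S"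
        by (auto simp: D_def)
      show "Sigma {..<k} ` ?P \<subseteq> D"
        by (fastforce simp: D_def PiE_def Pi_def)
      show "(\<lambda>S. restrict (\<lambda>i. {a. (i, a) \<in> S}) {..<k}) ` D \<subseteq> ?P"
        by (auto simp: D_def)
    qed
  qed
  finally show ?thesis .
qed

theorem mainTheorem8:
  fixes k t :: nat and n :: "nat \<Rightarrow> nat" and H :: "(nat \<times> nat) graph"
  assumes "k \<ge> 2"
    and "\<forall>i < k. n i \<ge> 3"
    and "t \<ge> 1"
    and "\<forall>i. Suc i < k \<longrightarrow> t \<le> (n i - 1) * (n (Suc i) - 1)"
    and "in_GS t k n H"
  shows "domination_poly H = (\<Prod>i<k. [:1, 1:] ^ n i - 1)"
proof -
  obtain F where F: "\<forall>i. Suc i < k \<longrightarrow> F i \<subseteq> {0..<n i - 1} \<times> {0..<n (Suc i) - 1}"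
    and H: "H = gs_graph k n F"
    using assms(5) unfolding in_GS_def by blast
  define V where "V = {(i, a). i < k \<and> a < n i}"
  define D where "D = {S. S \<subseteq> V \<and> (\<forall>i<k. \<exists>a. (i,a)\<in>S)}"
  have vH: "verts H = V" by (simp add: H gs_graph_def verts_def V_def)
  have finV: "finite V"
  proof -
    have "V \<subseteq> {..<k} \<times> {..<Max (n ` {..<k})}"
    proof
      fix x assume "x \<in> V"
      then obtain i a where x: "x = (i,a)" "i < k" "a < n i" by (auto simp: V_def)
      have "n i \<le> Max (n ` {..<k})" using x by (intro Max_ge) auto
      thus "x \<in> {..<k} \<times> {..<Max (n ` {..<k})}" using x less_le_trans[OF x(3)] by auto
    qed
    thus ?thesis by (rule finite_subset) auto
  qed
  have domiff: "dominating H S \<longleftrightarrow> S \<in> D" for S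
  proof
    assume d: "dominating H S"
    hence sub: "S \<subseteq> V" by (simp add: dominating_def vH)
    have "\<exists>a. (i,a)\<in>S" if i: "i < k" for i
    proof (rule ccontr)
      assume no: "\<not> (\<exists>a. (i,a)\<in>S)"
      let ?v = "(i, n i - 1)"
      have "?v \<in> verts H - S" using no i assms(2) by (auto simp: vH V_def)
      then obtain u where u: "u \<in> S" "{u, ?v} \<in> edges H"
        using d unfolding dominating_def by blast
      from u(2) show False
        unfolding H gs_graph_def edges_def snd_conv
      proof (elim UnE CollectE exE conjE)
        fix j a b assume "{u, ?v} = {(j, a), (j, b)}"
        hence "fst u = i" by (auto simp: doubleton_eq_iff)
        thus False using u(1) no by (cases u) auto
      next
        fix j a b assume e: "{u, ?v} = {(j, a), (Suc j, b)}" and j: "Suc j < k"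
          and ab: "(a, b) \<in> F j"
        have "(a,b) \<in> {0..<n j - 1} \<times> {0..<n (Suc j) - 1}" using F j ab by blast
        hence "a < n j - 1" "b < n (Suc j) - 1" by auto
        thus False using e by (auto simp: doubleton_eq_iff)
      qed
    qed
    thus "S \<in> D" using sub by (simp add: D_def)
  next
    assume S: "S \<in> D"
    show "dominating H S" unfolding dominating_def
    proof (intro conjI ballI)
      show "S \<subseteq> verts H" using S by (simp add: D_def vH)
      fix v assume v: "v \<in> verts H - S"
      then obtain i b where vb: "v = (i,b)" "i < k" "b < n i" by (auto simp: vH V_def)
      obtain a where a: "(i,a) \<in> S" using S vb by (auto simp: D_def)
      have "a < n i" "a \<noteq> b" using a S v vb by (auto simp: D_def V_def)
      hence "{(i,a), v} \<in> edges H" using vb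
        by (auto simp: H gs_graph_def edges_def)
      thus "\<exists>u\<in>S. {u, v} \<in> edges H" using a by blast
    qed
  qed
  have finD: "finite D" using finV by (simp add: D_def)
  have cardD: "card ` D \<subseteq> {1..card V}"
  proof
    fix c assume "c \<in> card ` D"
    then obtain S where S: "S \<in> D" "c = card S" by auto
    have "0 < k" using assms(1) by simp
    then obtain a where "(0,a) \<in> S" using S by (auto simp: D_def)
    hence "S \<noteq> {}" by auto
    moreover have "finite S" "card S \<le> card V" using S finV
      by (auto simp: D_def intro: finite_subset card_mono)
    ultimately show "c \<in> {1..card V}" using S by (auto simp: Suc_le_eq card_gt_0_iff)
  qed
  have "domination_poly H = (\<Sum>i = 1..card V. monom (int (card {S\<in>D. card S = i})) i)"
    unfolding domination_poly_def dom_count_def vH domiff by (simp add: conj_commute)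
  also have "\<dots> = (\<Sum>i = 1..card V. \<Sum>S\<in>{S\<in>D. card S = i}. [:0,1:]^card S)"
  proof (rule sum.cong[OF refl])
    fix i
    have "(\<Sum>S\<in>{S\<in>D. card S = i}. [:0,1:]^card S) = (\<Sum>S\<in>{S\<in>D. card S = i}. ([:0,1:]^i :: int poly))"
      by (rule sum.cong) auto
    also have "\<dots> = of_nat (card {S\<in>D. card S = i}) * [:0,1:]^i" by simp
    finally show "monom (int (card {S\<in>D. card S = i})) i = (\<Sum>S\<in>{S\<in>D. card S = i}. [:0,1:]^card S)"
      by (simp add: monom_altdef of_nat_mult_conv_smult)
  qed
  also have "\<dots> = (\<Sum>S\<in>D. [:0,1:]^card S)"
    by (rule sum.group[OF finD _ cardD]) auto
  also have "\<dots> = (\<Prod>i<k. [:1, 1:] ^ n i - 1)"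
    unfolding D_def V_def by (rule prod_eq[symmetric])
  finally show ?thesis .
qed

end
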